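(* Let $G$ be the loopless clique on $V=\{1,\dots,K\}$. For any sequence of loss functions $\ell_1,\dots,\ell_T$ with $\ell_t:V\to[0,1]$, the expected regret of the algorithm Exp3.G run with feedback graph $G$, exploration set $U=V$, and parameters $\eta=\sqrt{(\ln K)/(2T)}$ and $\gamma=2\eta$ is at most $5\sqrt{T\ln K}$.
   Context: The loopless clique on $V$ is the directed graph with edge set $\{(i,j):i,j\in V,\ i\ne j\}$ (no self-loops). For a directed graph $G=(V,E)$, $N^{\mathrm{in}}(i)=\{j:(j,i)\in E\}$, $N^{\mathrm{out}}(i)=\{j:(i,j)\in E\}$. Online learning with feedback graph $G$: the environment fixes in advance losses $\ell_t:V\to[0,1]$; on round $t$ the player draws $I_t$, incurs $\ell_t(I_t)$, and observes only $\{(j,\ell_t(j)):j\in N^{\mathrm{out}}(I_t)\}$. Expected regret: $\mathbb{E}[\sum_{t=1}^T\ell_t(I_t)]-\min_{i\in V}\sum_{t=1}^T\ell_t(i)$. Algorithm Exp3.G with parameters $G$, learning rate $\eta>0$, exploration set $U\subseteq V$, exploration rate $\gamma\in[0,1]$: let $u$ be uniform on $U$ and $q_1$ uniform on $V$. For $t=1,2,\dots$: $p_t=(1-\gamma)q_t+\gamma u$; draw $I_t\sim p_t$, play it and observe $\{(i,\ell_t(i)):i\in N^{\mathrm{out}}(I_t)\}$; set $\hat\ell_t(i)=\frac{\ell_t(i)}{P_t(i)}\mathbb{1}\{i\in N^{\mathrm{out}}(I_t)\}$ with $P_t(i)=\sum_{j\in N^{\mathrm{in}}(i)}p_t(j)$,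 and $q_{t+1}(i)=\frac{q_t(i)\exp(-\eta\hat\ell_t(i))}{\sum_{j}q_t(j)\exp(-\eta\hat\ell_t(j))}$. *)

theory Defs
  imports Complex_Main
begin

text \<open>Losses are given as l :: nat \<Rightarrow> nat \<Rightarrow> real, with l t i the loss of action i in round t
  (rounds are numbered 1, 2, ...).  A history is the list of actions played so far,
  most recent action first.\<close>

definition loopless_clique :: "nat set \<Rightarrow> (nat \<times> nat) set" where
  "loopless_clique V = {(i, j). i \<in> V \<and> j \<in> V \<and> i \<noteq> j}"

definition out_nbrs :: "(nat \<times> nat) set \<Rightarrow> nat \<Rightarrow> nat set" where
  "out_nbrs E i = {j. (i, j) \<in> E}"

definition in_nbrs :: "(nat \<times> nat) set \<Rightarrow> nat \<Rightarrow> nat set" where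
  "in_nbrs E i = {j. (j, i) \<in> E}"

definition exp3g_p :: "nat set \<Rightarrow> real \<Rightarrow> (nat \<Rightarrow> real) \<Rightarrow> nat \<Rightarrow> real" where
  "exp3g_p U \<gamma> q i = (1 - \<gamma>) * q i + \<gamma> * (if i \<in> U then 1 / real (card U) else 0)"

definition exp3g_P :: "(nat \<times> nat) set \<Rightarrow> nat set \<Rightarrow> (nat \<Rightarrow> real) \<Rightarrow> nat \<Rightarrow> real" where
  "exp3g_P E V p i = (\<Sum>j\<in>V \<inter> in_nbrs E i. p j)"

definition exp3g_lhat ::
  "(nat \<times> nat) set \<Rightarrow> nat set \<Rightarrow> (nat \<Rightarrow> nat \<Rightarrow> real) \<Rightarrow> nat \<Rightarrow> (nat \<Rightarrow> real) \<Rightarrow> nat \<Rightarrow> nat \<Rightarrow> real" where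
  "exp3g_lhat E V l t p a i =
     (if i \<in> out_nbrs E a then l t i / exp3g_P E V p i else 0)"

text \<open>Exponential-weights distribution q_{t} after history h (length h = t - 1).\<close>
fun exp3g_q ::
  "(nat \<times> nat) set \<Rightarrow> nat set \<Rightarrow> nat set \<Rightarrow> real \<Rightarrow> real \<Rightarrow> (nat \<Rightarrow> nat \<Rightarrow> real)
     \<Rightarrow> nat list \<Rightarrow> nat \<Rightarrow> real" where
  "exp3g_q E V U \<eta> \<gamma> l [] i = (if i \<in> V then 1 / real (card V) else 0)"
| "exp3g_q E V U \<eta> \<gamma> l (a # h) i =
     (let q = exp3g_q E V U \<eta> \<gamma> l h;
          p = exp3g_p U \<gamma> q;
          lh = exp3g_lhat E V l (length h + 1) p a
      in q i * exp (- \<eta> * lh i) / (\<Sum>j\<in>V. q j * exp (- \<eta> * lh j)))"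

definition exp3g_pt ::
  "(nat \<times> nat) set \<Rightarrow> nat set \<Rightarrow> nat set \<Rightarrow> real \<Rightarrow> real \<Rightarrow> (nat \<Rightarrow> nat \<Rightarrow> real)
     \<Rightarrow> nat list \<Rightarrow> nat \<Rightarrow> real" where
  "exp3g_pt E V U \<eta> \<gamma> l h = exp3g_p U \<gamma> (exp3g_q E V U \<eta> \<gamma> l h)"

text \<open>Expected loss incurred in the next n rounds, given history h
  (exact expectation over the algorithm's internal randomisation).\<close>
fun exp3g_exp_loss ::
  "(nat \<times> nat) set \<Rightarrow> nat set \<Rightarrow> nat set \<Rightarrow> real \<Rightarrow> real \<Rightarrow> (nat \<Rightarrow> nat \<Rightarrow> real)
     \<Rightarrow> nat \<Rightarrow> nat list \<Rightarrow> real" where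
  "exp3g_exp_loss E V U \<eta> \<gamma> l 0 h = 0"
| "exp3g_exp_loss E V U \<eta> \<gamma> l (Suc n) h =
     (\<Sum>a\<in>V. exp3g_pt E V U \<eta> \<gamma> l h a *
              (l (length h + 1) a + exp3g_exp_loss E V U \<eta> \<gamma> l n (a # h)))"

definition exp3g_regret ::
  "(nat \<times> nat) set \<Rightarrow> nat set \<Rightarrow> nat set \<Rightarrow> real \<Rightarrow> real \<Rightarrow> (nat \<Rightarrow> nat \<Rightarrow> real)
     \<Rightarrow> nat \<Rightarrow> real" where
  "exp3g_regret E V U \<eta> \<gamma> l T =
     exp3g_exp_loss E V U \<eta> \<gamma> l T [] - (MIN i\<in>V. \<Sum>t=1..T. l t i)"

end

theory Submission imports Defs begin
lemma exp_neg_bound: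
  fixes x :: real assumes "0 \<le> x" shows "exp (- x) \<le> 1 - x + x^2/2"
proof -
  let ?f = "\<lambda>x::real. 1 - x + x^2/2 - exp (- x)"
  have d: "\<And>y. (?f has_real_derivative (-1 + y + exp (- y))) (at y)"
    by (auto intro!: derivative_eq_intros simp: power2_eq_square)
  have "?f 0 \<le> ?f x"
    apply (rule DERIV_nonneg_imp_nondecreasing[OF assms])
    using d exp_ge_add_one_self[of "-_"] by (smt (verit))
  then show ?thesis by simp
qed

lemma exp_shift_bound:
  fixes \<eta> c L :: real
  assumes "0 \<le> c" "0 \<le> L" "0 < \<eta>" "\<eta> * c \<le> 1"
  shows "exp (- (\<eta> * (L - c))) \<le> 1 - \<eta> * (L - c) + \<eta>^2 * (L^2/2 + c^2)"
proof (cases "L \<ge> c")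
  case True
  let ?x = "\<eta> * (L - c)"
  have x0: "0 \<le> ?x" using True assms by simp
  have "?x \<le> \<eta> * L" using assms by (simp add: algebra_simps)
  hence "?x^2 \<le> (\<eta> * L)^2" using x0 by (intro power_mono) auto
  moreover have "(\<eta>*L)^2 = \<eta>^2*L^2" by (simp add: power_mult_distrib)
  moreover have "0 \<le> \<eta>^2*c^2" by simp
  moreover have "\<eta>^2 * (L^2/2 + c^2) = \<eta>^2*L^2/2 + \<eta>^2*c^2" by (simp add: algebra_simps)
  ultimately have "?x^2/2 \<le> \<eta>^2 * (L^2/2 + c^2)" by linarith
  then show ?thesis using exp_neg_bound[OF x0] by linarith
next
  case False
  let ?y = "\<eta> * (c - L)"
  have y0: "0 \<le> ?y" using False assms by simp
  have "?y \<le> \<eta> * c" using assms by (simp add: algebra_simps)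
  hence y1: "?y \<le> 1" using assms by linarith
  have "?y^2 \<le> (\<eta> * c)^2" using y0 \<open>?y \<le> \<eta> * c\<close> by (intro power_mono) auto
  moreover have "(\<eta>*c)^2 = \<eta>^2*c^2" by (simp add: power_mult_distrib)
  moreover have "0 \<le> \<eta>^2*L^2" by simp
  moreover have "\<eta>^2 * (L^2/2 + c^2) = \<eta>^2*L^2/2 + \<eta>^2*c^2" by (simp add: algebra_simps)
  ultimately have "?y^2 \<le> \<eta>^2 * (L^2/2 + c^2)" by linarith
  moreover have "exp ?y \<le> 1 + ?y + ?y^2" by (rule exp_bound[OF y0 y1])
  moreover have "- (\<eta> * (L - c)) = ?y" by (simp add: algebra_simps)
  ultimately show ?thesis by (smt (verit))
qed

lemma lnZ_bound:
  fixes V :: "nat set" and q L :: "nat \<Rightarrow> real" and \<eta> :: real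
  assumes fin: "finite V" and iV: "i \<in> V" and qpos: "\<forall>j\<in>V. q j > 0" and qsum: "sum q V = 1"
    and Lnn: "\<forall>j\<in>V. L j \<ge> 0" and eta: "\<eta> > 0" and Li: "\<eta> * L i \<le> 1"
  shows "ln (\<Sum>j\<in>V. q j * exp (- \<eta> * L j)) \<le>
           - \<eta> * (\<Sum>j\<in>V. q j * L j) + \<eta>^2 * (\<Sum>j\<in>V-{i}. q j * (L j^2/2 + L i^2))"
proof -
  define c where "c = L i"
  define R where "R = (\<Sum>j\<in>V-{i}. q j * (L j^2/2 + c^2))"
  define Z where "Z = (\<Sum>j\<in>V. q j * exp (- \<eta> * L j))"
  have c0: "0 \<le> c" using Lnn iV c_def by auto
  have pt: "q j * exp (- \<eta> * L j) \<le> exp (- \<eta> * c) *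
        (q j * (1 - \<eta> * (L j - c)) + (if j = i then 0 else \<eta>^2 * (q j * (L j^2/2 + c^2))))"
    if j: "j \<in> V" for j
  proof -
    have e: "exp (- \<eta> * L j) = exp (- \<eta> * c) * exp (- (\<eta> * (L j - c)))"
      by (simp add: exp_add[symmetric] algebra_simps)
    show ?thesis
    proof (cases "j = i")
      case True then show ?thesis by (simp add: c_def)
    next
      case False
      have "exp (- (\<eta> * (L j - c))) \<le> 1 - \<eta> * (L j - c) + \<eta>^2 * (L j^2/2 + c^2)"
        using exp_shift_bound[OF c0 _ eta] Lnn j Li c_def by auto
      hence "q j * exp (- (\<eta> * (L j - c))) \<le> q j * (1 - \<eta> * (L j - c)) + \<eta>^2 * (q j * (L j^2/2 + c^2))"
        using qpos j by (smt (verit, best) mult_left_mono ring_class.ring_distribs(1) mult.left_commute)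
      hence "exp (- \<eta> * c) * (q j * exp (- (\<eta> * (L j - c)))) \<le> exp (- \<eta> * c) * (q j * (1 - \<eta> * (L j - c)) + \<eta>^2 * (q j * (L j^2/2 + c^2)))"
        by (intro mult_left_mono) auto
      then show ?thesis using False e by (simp add: mult.left_commute)
    qed
  qed
  have "Z \<le> (\<Sum>j\<in>V. exp (- \<eta> * c) *
        (q j * (1 - \<eta> * (L j - c)) + (if j = i then 0 else \<eta>^2 * (q j * (L j^2/2 + c^2)))))"
    unfolding Z_def by (rule sum_mono) (use pt in auto)
  also have "\<dots> = exp (- \<eta> * c) * ((\<Sum>j\<in>V. q j * (1 - \<eta> * (L j - c))) +
        (\<Sum>j\<in>V. (if j = i then 0 else \<eta>^2 * (q j * (L j^2/2 + c^2)))))"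
    by (simp add: sum_distrib_left[symmetric] sum.distrib)
  also have "(\<Sum>j\<in>V. (if j = i then 0 else \<eta>^2 * (q j * (L j^2/2 + c^2)))) = \<eta>^2 * R"
    unfolding R_def using fin iV
    by (simp add: sum.If_cases sum_distrib_left Diff_eq Int_commute)
  also have "(\<Sum>j\<in>V. q j * (1 - \<eta> * (L j - c))) = 1 - \<eta> * (\<Sum>j\<in>V. q j * L j) + \<eta> * c"
  proof -
    have "(\<Sum>j\<in>V. q j * (1 - \<eta> * (L j - c))) = (\<Sum>j\<in>V. q j) - \<eta> * (\<Sum>j\<in>V. q j * L j) + \<eta> * c * (\<Sum>j\<in>V. q j)"
      by (simp add: algebra_simps sum.distrib sum_subtractf sum_distrib_left)
    then show ?thesis using qsum by simp
  qed
  finally have Zle0: "Z \<le> exp (- \<eta> * c) * (1 - \<eta> * (\<Sum>j\<in>V. q j * L j) + \<eta> * c + \<eta>^2 * R)" .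
  define y where "y = - \<eta> * (\<Sum>j\<in>V. q j * L j) + \<eta> * c + \<eta>^2 * R"
  have yeq: "1 + y = 1 - \<eta> * (\<Sum>j\<in>V. q j * L j) + \<eta> * c + \<eta>^2 * R" by (simp add: y_def)
  have Zle: "Z \<le> exp (- \<eta> * c) * (1 + y)" unfolding yeq by (rule Zle0)
  have Zpos: "Z > 0" unfolding Z_def using qpos iV fin
    by (intro sum_pos) auto
  have y1: "1 + y > 0"
  proof (rule ccontr)
    assume "\<not> 1 + y > 0"
    hence "exp (- \<eta> * c) * (1 + y) \<le> 0" by (simp add: mult_nonneg_nonpos)
    thus False using Zle Zpos by linarith
  qed
  have "ln Z \<le> ln (exp (- \<eta> * c) * (1 + y))"
    using Zle Zpos by (intro ln_mono) auto
  also have "\<dots> = - \<eta> * c + ln (1 + y)" using y1 by (simp add: ln_mult)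
  also have "\<dots> \<le> - \<eta> * c + y" using ln_le_minus_one[OF y1] by simp
  finally show ?thesis unfolding Z_def y_def R_def c_def by simp
qed

context
  fixes K T :: nat and V :: "nat set" and l :: "nat \<Rightarrow> nat \<Rightarrow> real" and \<eta> \<gamma> :: real
  assumes K2: "K \<ge> 2" and finV: "finite V" and cardV: "card V = K"
    and lb: "\<forall>t\<in>{1..T}. \<forall>i\<in>V. 0 \<le> l t i \<and> l t i \<le> 1"
    and etapos: "\<eta> > 0" and gam: "\<gamma> = 2 * \<eta>" and gam1: "\<gamma> \<le> 1"
begin

abbreviation "EE \<equiv> loopless_clique V"
abbreviation "QQ h \<equiv> exp3g_q EE V V \<eta> \<gamma> l h"
abbreviation "PP h \<equiv> exp3g_pt EE V V \<eta> \<gamma> l h"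

lemma out_EE: "out_nbrs EE a = (if a \<in> V then V - {a} else {})"
  by (auto simp: out_nbrs_def loopless_clique_def)

lemma in_EE: "j \<in> V \<Longrightarrow> V \<inter> in_nbrs EE j = V - {j}"
  by (auto simp: in_nbrs_def loopless_clique_def)

lemma Vne: "V \<noteq> {}" using cardV K2 by auto

lemma q_inv: "(\<forall>i\<in>V. QQ h i > 0) \<and> sum (QQ h) V = 1"
proof (induction h)
  case Nil
  have "K > 0" using K2 by simp
  then show ?case using cardV by simp
next
  case (Cons a h)
  define q where "q = QQ h"
  define lh where "lh = exp3g_lhat EE V l (length h + 1) (exp3g_p V \<gamma> q) a"
  define Z where "Z = (\<Sum>j\<in>V. q j * exp (- \<eta> * lh j))"
  have qp: "\<forall>i\<in>V. q i > 0" using Cons q_def by simp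
  have Zp: "Z > 0" unfolding Z_def using qp finV Vne by (intro sum_pos) auto
  have eq: "QQ (a # h) i = q i * exp (- \<eta> * lh i) / Z" for i
    by (simp add: q_def lh_def Z_def Let_def)
  have pos: "\<forall>i\<in>V. QQ (a # h) i > 0" using qp Zp eq by simp
  have s1: "sum (QQ (a # h)) V = (\<Sum>i\<in>V. q i * exp (- \<eta> * lh i) / Z)"
    by (rule sum.cong) (simp_all only: eq)
  have s2: "(\<Sum>i\<in>V. q i * exp (- \<eta> * lh i) / Z) = Z / Z"
    unfolding Z_def by (rule sum_divide_distrib[symmetric])
  have s3: "Z / Z = 1" using Zp by simp
  have "sum (QQ (a # h)) V = 1" using s1 s2 s3 by linarith
  then show ?case using pos by blast
qed

lemma p_eq: "i \<in> V \<Longrightarrow> PP h i = (1 - \<gamma>) * QQ h i + \<gamma> / K"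
  by (simp add: exp3g_pt_def exp3g_p_def cardV)

lemma p_ge: "i \<in> V \<Longrightarrow> PP h i \<ge> \<gamma> / K"
proof -
  assume i: "i \<in> V"
  have "0 \<le> (1 - \<gamma>) * QQ h i" using gam1 q_inv[of h] i by (simp add: less_imp_le)
  thus ?thesis using p_eq[OF i] by simp
qed

lemma gpos: "\<gamma> > 0" using gam etapos by simp

lemma p_pos: "i \<in> V \<Longrightarrow> PP h i > 0"
proof -
  assume i: "i \<in> V"
  have "\<gamma> / K > 0" using gpos K2 by simp
  thus ?thesis using p_ge[OF i, of h] by linarith
qed

lemma p_sum: "sum (PP h) V = 1"
proof -
  have "sum (PP h) V = (\<Sum>i\<in>V. (1 - \<gamma>) * QQ h i + \<gamma> / K)"
    by (rule sum.cong) (simp_all add: p_eq)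
  also have "\<dots> = (1 - \<gamma>) * sum (QQ h) V + \<gamma> / K * K"
    by (simp add: sum.distrib sum_distrib_left cardV)
  also have "\<dots> = 1" using q_inv[of h] K2 by simp
  finally show ?thesis .
qed

definition "PN h j = exp3g_P EE V (PP h) j"

lemma PN_eq: "j \<in> V \<Longrightarrow> PN h j = 1 - PP h j"
proof -
  assume j: "j \<in> V"
  have "PN h j = sum (PP h) (V - {j})" unfolding PN_def exp3g_P_def in_EE[OF j] ..
  also have "\<dots> = 1 - PP h j" using p_sum[of h] j finV by (simp add: sum_diff1)
  finally show ?thesis .
qed

lemma q_le1: "j \<in> V \<Longrightarrow> QQ h j \<le> 1"
proof -
  assume j: "j \<in> V"
  have "QQ h j \<le> sum (QQ h) V"
    by (rule member_le_sum) (use q_inv[of h] j finV in \<open>auto simp: less_imp_le\<close>)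
  thus ?thesis using q_inv[of h] by simp
qed

lemma PN_big: "j \<in> V \<Longrightarrow> PN h j \<ge> \<eta> \<and> 2 * PN h j \<ge> 1 - QQ h j"
proof -
  assume j: "j \<in> V"
  define q where "q = QQ h j"
  define d where "d = \<gamma> / real K"
  have q01: "0 \<le> q" "q \<le> 1" using q_inv[of h] j q_le1[OF j] unfolding q_def by (auto simp: less_imp_le)
  have K: "real K \<ge> 2" using K2 by simp
  have gk0: "\<gamma> / K \<le> \<gamma> / 2" using K gpos by (intro divide_left_mono) auto
  have gk: "2 * d \<le> \<gamma>" using gk0 unfolding d_def by (simp add: mult.commute)
  have P: "PN h j = 1 - ((1 - \<gamma>) * q + d)"
    using PN_eq[OF j, of h] p_eq[OF j, of h] unfolding q_def d_def by simp
  have e1: "(1-\<gamma>)*q = q - \<gamma>*q" by (simp add: algebra_simps)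
  have a: "(1 - \<gamma>) * (1 - q) \<ge> 0" using gam1 q01 by simp
  have e2: "(1-\<gamma>)*(1-q) = 1 - \<gamma> - q + \<gamma>*q" by (simp add: algebra_simps)
  have "PN h j \<ge> \<eta>" using P a gk gam e1 e2 by (smt (verit))
  moreover have "2 * PN h j \<ge> 1 - q"
  proof (cases "2 * \<gamma> \<le> 1")
    case True
    have "(1 - 2 * \<gamma>) * (1 - q) \<ge> 0" using True q01 by simp
    moreover have "(1 - 2 * \<gamma>) * (1 - q) = 1 - 2 * \<gamma> - q + 2 * (\<gamma> * q)" by (simp add: algebra_simps)
    ultimately show ?thesis using P gk gpos e1 by (smt (verit))
  next
    case False
    have "(2 * \<gamma> - 1) * (1 - q) \<le> (2 * \<gamma> - 1)" using False q01
      by (simp add: mult_left_le)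
    moreover have "(2 * \<gamma> - 1) * (1 - q) = 2 * \<gamma> - 1 - 2 * (\<gamma> * q) + q" by (simp add: algebra_simps)
    ultimately show ?thesis using P gk gam1 e1 by (smt (verit))
  qed
  ultimately show ?thesis using q_def by simp
qed

lemma PN_half: "j \<in> V \<Longrightarrow> QQ h j \<le> 1/2 \<Longrightarrow> PN h j \<ge> 1/2"
proof -
  assume j: "j \<in> V" and q: "QQ h j \<le> 1/2"
  define d where "d = \<gamma> / real K"
  have K: "real K \<ge> 2" using K2 by simp
  have gk0: "\<gamma> / K \<le> \<gamma> / 2" using K gpos by (intro divide_left_mono) auto
  have gk: "2 * d \<le> \<gamma>" using gk0 unfolding d_def by (simp add: mult.commute)
  have P: "PN h j = 1 - ((1 - \<gamma>) * QQ h j + d)"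
    using PN_eq[OF j, of h] p_eq[OF j, of h] unfolding d_def by simp
  have "(1 - \<gamma>) * (2 * QQ h j) \<le> (1 - \<gamma>) * 1" using q gam1 by (intro mult_left_mono) auto
  hence "2 * ((1 - \<gamma>) * QQ h j) \<le> 1 - \<gamma>" by (simp add: algebra_simps)
  hence "2 * PN h j \<ge> 1" using P gk by (smt (verit))
  thus ?thesis by simp
qed

lemma PN_pos: "j \<in> V \<Longrightarrow> PN h j > 0"
  using PN_big[of j h] etapos by linarith


lemma q_nn: "j \<in> V \<Longrightarrow> QQ h j \<ge> 0" using q_inv[of h] by (simp add: less_imp_le)

definition "LH h a j = exp3g_lhat EE V l (length h + 1) (PP h) a j"

lemma LH_eq: "a \<in> V \<Longrightarrow> LH h a j = (if j \<in> V \<and> j \<noteq> a then l (length h + 1) j / PN h j else 0)"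
  by (auto simp: LH_def exp3g_lhat_def out_EE PN_def)

lemma unb: "j \<in> V \<Longrightarrow> (\<Sum>a\<in>V. PP h a * LH h a j) = l (length h + 1) j"
proof -
  assume j: "j \<in> V"
  let ?c = "l (length h + 1) j / PN h j"
  have "(\<Sum>a\<in>V. PP h a * LH h a j) = (\<Sum>a\<in>V - {j}. PP h a * LH h a j) + PP h j * LH h j j"
    using j finV by (simp add: sum.remove add.commute)
  also have "PP h j * LH h j j = 0" using j by (simp add: LH_eq)
  also have "(\<Sum>a\<in>V - {j}. PP h a * LH h a j) = (\<Sum>a\<in>V - {j}. PP h a * ?c)"
    by (rule sum.cong) (use j in \<open>auto simp: LH_eq\<close>)
  also have "\<dots> = PN h j * ?c"
  proof -
    have PNs: "sum (PP h) (V-{j}) = PN h j" by (simp add: PN_def exp3g_P_def in_EE[OF j])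
    show ?thesis by (simp only: sum_distrib_right[symmetric] PNs)
  qed
  also have "\<dots> = l (length h + 1) j" using PN_pos[OF j, of h] by simp
  finally show ?thesis by simp
qed

lemma mom2: "j \<in> V \<Longrightarrow> (\<Sum>a\<in>V. PP h a * (LH h a j)^2) = (l (length h + 1) j)^2 / PN h j"
proof -
  assume j: "j \<in> V"
  let ?c = "(l (length h + 1) j / PN h j)^2"
  have "(\<Sum>a\<in>V. PP h a * (LH h a j)^2) = (\<Sum>a\<in>V - {j}. PP h a * (LH h a j)^2) + PP h j * (LH h j j)^2"
    using j finV by (simp add: sum.remove add.commute)
  also have "PP h j * (LH h j j)^2 = 0" using j by (simp add: LH_eq)
  also have "(\<Sum>a\<in>V - {j}. PP h a * (LH h a j)^2) = (\<Sum>a\<in>V - {j}. PP h a * ?c)"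
    by (rule sum.cong) (use j in \<open>auto simp: LH_eq\<close>)
  also have "\<dots> = PN h j * ?c"
  proof -
    have PNs: "sum (PP h) (V-{j}) = PN h j" by (simp add: PN_def exp3g_P_def in_EE[OF j])
    show ?thesis by (simp only: sum_distrib_right[symmetric] PNs)
  qed
  also have "\<dots> = (l (length h + 1) j)^2 / PN h j" using PN_pos[OF j, of h]
    by (simp add: power2_eq_square)
  finally show ?thesis by simp
qed

lemma LH_nn: "a \<in> V \<Longrightarrow> length h + 1 \<le> T \<Longrightarrow> LH h a j \<ge> 0"
  using lb PN_pos[of j h] by (auto simp: LH_eq)

lemma LH_le: "a \<in> V \<Longrightarrow> length h + 1 \<le> T \<Longrightarrow> \<eta> * LH h a j \<le> 1"
proof -
  assume a: "a \<in> V" and t: "length h + 1 \<le> T"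
  show ?thesis
  proof (cases "j \<in> V \<and> j \<noteq> a")
    case True
    have l1: "l (length h + 1) j \<le> 1" "0 \<le> l (length h + 1) j" using lb t True by auto
    have P: "PN h j \<ge> \<eta>" "PN h j > 0" using PN_big[of j h] PN_pos[of j h] True by auto
    have "\<eta> * (l (length h + 1) j / PN h j) \<le> PN h j * (1 / PN h j)"
      using l1 P etapos by (intro mult_mono divide_right_mono) auto
    then show ?thesis using True a P by (simp add: LH_eq)
  next
    case False
    then show ?thesis using a by (auto simp: LH_eq)
  qed
qed

lemma Qstep: "QQ (a # h) k = QQ h k * exp (- \<eta> * LH h a k) / (\<Sum>j\<in>V. QQ h j * exp (- \<eta> * LH h a j))"
  by (simp add: LH_def exp3g_pt_def Let_def)


lemma argmax_ex: "\<exists>i\<in>V. \<forall>j\<in>V. QQ h j \<le> QQ h i"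
proof -
  have "Max (QQ h ` V) \<in> QQ h ` V" using finV Vne by (intro Max_in) auto
  then obtain i where i: "i \<in> V" "QQ h i = Max (QQ h ` V)" by auto
  have "\<forall>j\<in>V. QQ h j \<le> QQ h i" using i finV by (auto intro: Max_ge)
  thus ?thesis using i by blast
qed

lemma pl_bound: "length h + 1 \<le> T \<Longrightarrow>
   (\<Sum>a\<in>V. PP h a * l (length h + 1) a) \<le> (\<Sum>j\<in>V. QQ h j * l (length h + 1) j) + \<gamma>"
proof -
  assume t: "length h + 1 \<le> T"
  let ?t = "length h + 1"
  have "(\<Sum>a\<in>V. PP h a * l ?t a) = (\<Sum>a\<in>V. (1 - \<gamma>) * (QQ h a * l ?t a) + \<gamma> / K * l ?t a)"
    by (rule sum.cong) (simp_all add: p_eq algebra_simps)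
  also have "\<dots> = (1 - \<gamma>) * (\<Sum>a\<in>V. QQ h a * l ?t a) + \<gamma> / K * (\<Sum>a\<in>V. l ?t a)"
    by (simp add: sum.distrib sum_distrib_left)
  finally have e: "(\<Sum>a\<in>V. PP h a * l ?t a) = (1 - \<gamma>) * (\<Sum>a\<in>V. QQ h a * l ?t a) + \<gamma> / K * (\<Sum>a\<in>V. l ?t a)" .
  have X0: "(\<Sum>a\<in>V. QQ h a * l ?t a) \<ge> 0"
    using lb t q_nn by (intro sum_nonneg) auto
  have "(\<Sum>a\<in>V. l ?t a) \<le> of_nat (card V) * 1"
    using lb t by (intro sum_bounded_above) auto
  hence S: "(\<Sum>a\<in>V. l ?t a) \<le> K" using cardV by simp
  have "\<gamma> / K * (\<Sum>a\<in>V. l ?t a) \<le> \<gamma> / K * K"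
    using S gpos by (intro mult_left_mono) auto
  also have "\<gamma> / K * K = \<gamma>" using K2 by simp
  finally have b1: "\<gamma> / K * (\<Sum>a\<in>V. l ?t a) \<le> \<gamma>" .
  have b2: "(1 - \<gamma>) * (\<Sum>a\<in>V. QQ h a * l ?t a) \<le> (\<Sum>a\<in>V. QQ h a * l ?t a)"
    using X0 gpos by (simp add: algebra_simps)
  show ?thesis using e b1 b2 by linarith
qed

lemma R_bound:
  assumes t: "length h + 1 \<le> T" and iV: "i \<in> V" and imax: "\<forall>j\<in>V. QQ h j \<le> QQ h i"
  shows "(\<Sum>a\<in>V. PP h a * (\<Sum>j\<in>V-{i}. QQ h j * ((LH h a j)^2/2 + (LH h a i)^2))) \<le> 3"
proof -
  let ?t = "length h + 1"
  have "(\<Sum>a\<in>V. PP h a * (\<Sum>j\<in>V-{i}. QQ h j * ((LH h a j)^2/2 + (LH h a i)^2)))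
      = (\<Sum>a\<in>V. \<Sum>j\<in>V-{i}. QQ h j * (PP h a * (LH h a j)^2/2 + PP h a * (LH h a i)^2))"
    by (simp add: sum_distrib_left algebra_simps)
  also have "\<dots> = (\<Sum>j\<in>V-{i}. \<Sum>a\<in>V. QQ h j * (PP h a * (LH h a j)^2/2 + PP h a * (LH h a i)^2))"
    by (rule sum.swap)
  also have "\<dots> = (\<Sum>j\<in>V-{i}. QQ h j * ((\<Sum>a\<in>V. PP h a * (LH h a j)^2)/2 + (\<Sum>a\<in>V. PP h a * (LH h a i)^2)))"
  proof (rule sum.cong[OF refl])
    fix j
    have "(\<Sum>a\<in>V. QQ h j * (PP h a * (LH h a j)^2/2 + PP h a * (LH h a i)^2))
       = (\<Sum>a\<in>V. QQ h j * (PP h a * (LH h a j)^2) / 2) + (\<Sum>a\<in>V. QQ h j * (PP h a * (LH h a i)^2))"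
      by (simp add: sum.distrib[symmetric] ring_distribs)
    also have "\<dots> = QQ h j * ((\<Sum>a\<in>V. PP h a * (LH h a j)^2)/2 + (\<Sum>a\<in>V. PP h a * (LH h a i)^2))"
      by (simp add: ring_distribs sum_distrib_left sum_divide_distrib)
    finally show "(\<Sum>a\<in>V. QQ h j * (PP h a * (LH h a j)^2/2 + PP h a * (LH h a i)^2))
       = QQ h j * ((\<Sum>a\<in>V. PP h a * (LH h a j)^2)/2 + (\<Sum>a\<in>V. PP h a * (LH h a i)^2))" .
  qed
  also have "\<dots> = (\<Sum>j\<in>V-{i}. QQ h j * ((l ?t j)^2 / PN h j / 2 + (l ?t i)^2 / PN h i))"
    by (rule sum.cong) (use iV in \<open>auto simp: mom2\<close>)
  also have "\<dots> \<le> (\<Sum>j\<in>V-{i}. QQ h j * (1 + 1 / PN h i))"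
  proof (rule sum_mono)
    fix j assume j: "j \<in> V - {i}"
    have qj: "QQ h j \<le> 1/2"
    proof -
      have "sum (QQ h) {i, j} \<le> sum (QQ h) V"
        using j iV finV q_nn by (intro sum_mono2) auto
      hence "QQ h i + QQ h j \<le> 1" using j q_inv[of h] by simp
      moreover have "QQ h j \<le> QQ h i" using imax j by auto
      ultimately have "2 * QQ h j \<le> 1" by linarith
      thus ?thesis by simp
    qed
    have Pj: "PN h j \<ge> 1/2" using PN_half[OF _ qj] j by simp
    have Pi: "PN h i > 0" using PN_pos[OF iV] .
    have lj: "(l ?t j)^2 \<le> 1" using lb t j by (intro power_le_one) auto
    have li: "(l ?t i)^2 \<le> 1" using lb t iV by (intro power_le_one) auto
    have "(l ?t j)^2 / PN h j / 2 \<le> 1"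
    proof -
      have "(l ?t j)^2 \<le> 2 * PN h j" using lj Pj by linarith
      thus ?thesis using Pj by (simp add: divide_le_eq)
    qed
    moreover have "(l ?t i)^2 / PN h i \<le> 1 / PN h i" using li Pi by (intro divide_right_mono) auto
    ultimately show "QQ h j * ((l ?t j)^2 / PN h j / 2 + (l ?t i)^2 / PN h i) \<le> QQ h j * (1 + 1 / PN h i)"
      using q_nn[of j h] j by (intro mult_left_mono) auto
  qed
  also have "\<dots> = (1 - QQ h i) * (1 + 1 / PN h i)"
  proof -
    have "sum (QQ h) (V - {i}) = 1 - QQ h i" using q_inv[of h] iV finV by (simp add: sum_diff1)
    thus ?thesis by (simp add: sum_distrib_right[symmetric])
  qed
  also have "\<dots> \<le> 3"
  proof -
    have Pi: "PN h i > 0" using PN_pos[OF iV] .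
    have s: "1 - QQ h i \<le> 2 * PN h i" using PN_big[OF iV] by simp
    have s0: "0 \<le> 1 - QQ h i" "1 - QQ h i \<le> 1" using q_le1[OF iV] q_nn[OF iV] by auto
    have "(1 - QQ h i) / PN h i \<le> 2" using s Pi by (simp add: divide_le_eq)
    moreover have "(1 - QQ h i) * (1 + 1 / PN h i) = (1 - QQ h i) + (1 - QQ h i) / PN h i"
      by (simp add: distrib_left)
    ultimately show ?thesis using s0 by linarith
  qed
  finally show ?thesis .
qed


lemma round_bound:
  assumes t: "length h + 1 \<le> T" and k: "k \<in> V"
  shows "(\<Sum>a\<in>V. PP h a * l (length h + 1) a) \<le> l (length h + 1) k + 5 * \<eta>
           + (\<Sum>a\<in>V. PP h a * (ln (QQ (a # h) k) - ln (QQ h k))) / \<eta>"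
proof -
  let ?t = "length h + 1"
  obtain i where iV: "i \<in> V" and imax: "\<forall>j\<in>V. QQ h j \<le> QQ h i" using argmax_ex[of h] by blast
  define R where "R a = (\<Sum>j\<in>V-{i}. QQ h j * ((LH h a j)^2/2 + (LH h a i)^2))" for a
  define D where "D a = ln (QQ (a # h) k) - ln (QQ h k)" for a
  have qk: "QQ h k > 0" using q_inv[of h] k by auto
  have step: "\<eta> * (\<Sum>j\<in>V. QQ h j * LH h a j) \<le> \<eta> * LH h a k + D a + \<eta>^2 * R a" if a: "a \<in> V" for a
  proof -
    define Z where "Z = (\<Sum>j\<in>V. QQ h j * exp (- \<eta> * LH h a j))"
    have lnZ: "ln Z \<le> - \<eta> * (\<Sum>j\<in>V. QQ h j * LH h a j) + \<eta>^2 * R a"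
      unfolding Z_def R_def
    proof (rule lnZ_bound[OF finV iV])
      show "\<forall>j\<in>V. 0 < QQ h j" using q_inv[of h] by blast
      show "sum (QQ h) V = 1" using q_inv[of h] by blast
      show "\<forall>j\<in>V. 0 \<le> LH h a j" using LH_nn[OF a t] by blast
      show "0 < \<eta>" by (rule etapos)
      show "\<eta> * LH h a i \<le> 1" by (rule LH_le[OF a t])
    qed
    have Zp: "Z > 0" unfolding Z_def using q_inv[of h] finV Vne by (intro sum_pos) auto
    have "QQ (a # h) k = QQ h k * exp (- \<eta> * LH h a k) / Z" unfolding Z_def by (rule Qstep)
    hence "ln (QQ (a # h) k) = ln (QQ h k) + (- \<eta> * LH h a k) - ln Z"
      using qk Zp by (simp add: ln_div ln_mult)
    hence "D a = - \<eta> * LH h a k - ln Z" unfolding D_def by simp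
    thus ?thesis using lnZ by linarith
  qed
  have lhs: "(\<Sum>a\<in>V. PP h a * (\<eta> * (\<Sum>j\<in>V. QQ h j * LH h a j))) = \<eta> * (\<Sum>j\<in>V. QQ h j * l ?t j)"
  proof -
    have "(\<Sum>a\<in>V. PP h a * (\<eta> * (\<Sum>j\<in>V. QQ h j * LH h a j))) = \<eta> * (\<Sum>a\<in>V. \<Sum>j\<in>V. QQ h j * (PP h a * LH h a j))"
      by (simp add: sum_distrib_left mult.left_commute)
    also have "\<dots> = \<eta> * (\<Sum>j\<in>V. \<Sum>a\<in>V. QQ h j * (PP h a * LH h a j))"
      by (subst sum.swap) (rule refl)
    also have "\<dots> = \<eta> * (\<Sum>j\<in>V. QQ h j * (\<Sum>a\<in>V. PP h a * LH h a j))"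
      by (simp add: sum_distrib_left)
    also have "\<dots> = \<eta> * (\<Sum>j\<in>V. QQ h j * l ?t j)"
      by (simp add: unb)
    finally show ?thesis .
  qed
  have rhs: "(\<Sum>a\<in>V. PP h a * (\<eta> * LH h a k + D a + \<eta>^2 * R a))
      = \<eta> * l ?t k + (\<Sum>a\<in>V. PP h a * D a) + \<eta>^2 * (\<Sum>a\<in>V. PP h a * R a)"
  proof -
    have "(\<Sum>a\<in>V. PP h a * (\<eta> * LH h a k + D a + \<eta>^2 * R a))
      = \<eta> * (\<Sum>a\<in>V. PP h a * LH h a k) + (\<Sum>a\<in>V. PP h a * D a) + \<eta>^2 * (\<Sum>a\<in>V. PP h a * R a)"
      by (simp add: sum.distrib sum_distrib_left ring_distribs mult.left_commute)
    thus ?thesis by (simp add: unb[OF k])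
  qed
  have "(\<Sum>a\<in>V. PP h a * (\<eta> * (\<Sum>j\<in>V. QQ h j * LH h a j))) \<le> (\<Sum>a\<in>V. PP h a * (\<eta> * LH h a k + D a + \<eta>^2 * R a))"
    by (rule sum_mono, rule mult_left_mono) (use step p_pos in \<open>auto simp: less_imp_le\<close>)
  hence S1: "\<eta> * (\<Sum>j\<in>V. QQ h j * l ?t j) \<le> \<eta> * l ?t k + (\<Sum>a\<in>V. PP h a * D a) + \<eta>^2 * (\<Sum>a\<in>V. PP h a * R a)"
    using lhs rhs by simp
  have RB: "(\<Sum>a\<in>V. PP h a * R a) \<le> 3" unfolding R_def by (rule R_bound[OF t iV imax])
  have "\<eta>^2 * (\<Sum>a\<in>V. PP h a * R a) \<le> \<eta>^2 * 3" using RB by (intro mult_left_mono) auto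
  hence S2: "\<eta> * (\<Sum>j\<in>V. QQ h j * l ?t j) \<le> \<eta> * (l ?t k + (\<Sum>a\<in>V. PP h a * D a) / \<eta> + 3 * \<eta>)"
  proof -
    have "\<eta> * (l ?t k + (\<Sum>a\<in>V. PP h a * D a) / \<eta> + 3 * \<eta>) = \<eta> * l ?t k + (\<Sum>a\<in>V. PP h a * D a) + \<eta>^2 * 3"
      using etapos by (simp add: distrib_left power2_eq_square)
    thus ?thesis using S1 \<open>\<eta>^2 * (\<Sum>a\<in>V. PP h a * R a) \<le> \<eta>^2 * 3\<close> by linarith
  qed
  have S3: "(\<Sum>j\<in>V. QQ h j * l ?t j) \<le> l ?t k + (\<Sum>a\<in>V. PP h a * D a) / \<eta> + 3 * \<eta>"
    using S2 etapos by (simp add: mult_le_cancel_left_pos)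
  have "(\<Sum>a\<in>V. PP h a * l ?t a) \<le> (\<Sum>j\<in>V. QQ h j * l ?t j) + \<gamma>" by (rule pl_bound[OF t])
  thus ?thesis using S3 gam unfolding D_def by linarith
qed

lemma main_bound:
  "length h + n \<le> T \<Longrightarrow> k \<in> V \<Longrightarrow>
    exp3g_exp_loss EE V V \<eta> \<gamma> l n h \<le> (\<Sum>s<n. l (length h + 1 + s) k) + real n * (5 * \<eta>) - ln (QQ h k) / \<eta>"
proof (induction n arbitrary: h)
  case 0
  have "QQ h k \<le> 1" "QQ h k > 0" using q_le1[OF 0(2)] q_inv[of h] 0(2) by auto
  hence "ln (QQ h k) \<le> 0" by simp
  hence "ln (QQ h k) / \<eta> \<le> 0" using etapos by (simp add: divide_nonpos_pos)
  then show ?case by simp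
next
  case (Suc n)
  let ?t = "length h + 1"
  define S where "S = (\<Sum>s<n. l (length h + 1 + Suc s) k)"
  have IH: "exp3g_exp_loss EE V V \<eta> \<gamma> l n (a # h) \<le> S + real n * (5 * \<eta>) - ln (QQ (a # h) k) / \<eta>" for a
    using Suc.IH[of "a # h"] Suc.prems unfolding S_def by (simp add: add.assoc)
  have "exp3g_exp_loss EE V V \<eta> \<gamma> l (Suc n) h
      = (\<Sum>a\<in>V. PP h a * (l ?t a + exp3g_exp_loss EE V V \<eta> \<gamma> l n (a # h)))" by simp
  also have "\<dots> \<le> (\<Sum>a\<in>V. PP h a * (l ?t a + (S + real n * (5 * \<eta>) - ln (QQ (a # h) k) / \<eta>)))"
    by (rule sum_mono, rule mult_left_mono) (use IH p_pos in \<open>auto simp: less_imp_le\<close>)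
  also have "\<dots> = (\<Sum>a\<in>V. PP h a * l ?t a + (S + real n * (5 * \<eta>)) * PP h a
        - PP h a * ln (QQ (a # h) k) / \<eta>)"
    by (rule sum.cong[OF refl]) (simp add: ring_distribs)
  also have "\<dots> = (\<Sum>a\<in>V. PP h a * l ?t a) + (S + real n * (5 * \<eta>)) * (\<Sum>a\<in>V. PP h a)
        - (\<Sum>a\<in>V. PP h a * ln (QQ (a # h) k)) / \<eta>"
    by (simp only: sum.distrib sum_subtractf sum_distrib_left[symmetric] sum_divide_distrib[symmetric])
  finally have A: "exp3g_exp_loss EE V V \<eta> \<gamma> l (Suc n) h \<le> (\<Sum>a\<in>V. PP h a * l ?t a) + (S + real n * (5 * \<eta>)) * (\<Sum>a\<in>V. PP h a)
        - (\<Sum>a\<in>V. PP h a * ln (QQ (a # h) k)) / \<eta>" .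
  have B: "(\<Sum>a\<in>V. PP h a * l ?t a) \<le> l ?t k + 5 * \<eta>
           + (\<Sum>a\<in>V. PP h a * (ln (QQ (a # h) k) - ln (QQ h k))) / \<eta>"
    using round_bound[of h k] Suc.prems by simp
  have C: "(\<Sum>a\<in>V. PP h a * (ln (QQ (a # h) k) - ln (QQ h k)))
       = (\<Sum>a\<in>V. PP h a * ln (QQ (a # h) k)) - ln (QQ h k)"
  proof -
    have "(\<Sum>a\<in>V. PP h a * (ln (QQ (a # h) k) - ln (QQ h k)))
       = (\<Sum>a\<in>V. PP h a * ln (QQ (a # h) k)) - (\<Sum>a\<in>V. PP h a) * ln (QQ h k)"
      by (simp add: right_diff_distrib sum_subtractf sum_distrib_right)
    thus ?thesis using p_sum[of h] by simp
  qed
  have D: "(\<Sum>s<Suc n. l (length h + 1 + s) k) = l ?t k + S"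
    unfolding S_def sum.lessThan_Suc_shift by simp
  have E: "((\<Sum>a\<in>V. PP h a * ln (QQ (a # h) k)) - ln (QQ h k)) / \<eta>
      = (\<Sum>a\<in>V. PP h a * ln (QQ (a # h) k)) / \<eta> - ln (QQ h k) / \<eta>" by (simp add: diff_divide_distrib)
  have F: "real (Suc n) * (5 * \<eta>) = real n * (5 * \<eta>) + 5 * \<eta>" by (simp add: algebra_simps)
  have G: "(S + real n * (5 * \<eta>)) * (\<Sum>a\<in>V. PP h a) = S + real n * (5 * \<eta>)" using p_sum[of h] by simp
  have CE: "(\<Sum>a\<in>V. PP h a * (ln (QQ (a # h) k) - ln (QQ h k))) / \<eta>
      = (\<Sum>a\<in>V. PP h a * ln (QQ (a # h) k)) / \<eta> - ln (QQ h k) / \<eta>"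
    unfolding C by (rule E)
  from A B CE D F G show ?case by linarith
qed

end

lemma final_arith:
  fixes L Tr \<eta> :: real
  assumes L: "L > 0" and Tr: "Tr \<ge> 1" and eta: "\<eta> = sqrt (L / (2 * Tr))"
  shows "5 * Tr * \<eta> + L / \<eta> \<le> 5 * sqrt (Tr * L)"
proof -
  have ep: "\<eta> > 0" using eta L Tr by simp
  have e2: "\<eta>^2 = L / (2 * Tr)" using eta L Tr by simp
  define x where "x = \<eta> * sqrt (Tr * L)"
  have x0: "x \<ge> 0" unfolding x_def using ep L Tr by simp
  have s2: "(sqrt (Tr * L))^2 = Tr * L" using L Tr by simp
  have "x^2 = \<eta>^2 * (sqrt (Tr * L))^2" unfolding x_def by (simp add: power_mult_distrib)
  also have "\<dots> = L / (2 * Tr) * (Tr * L)" using e2 s2 by simp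
  also have "\<dots> = L^2 / 2" using Tr by (simp add: field_simps power2_eq_square)
  finally have x2: "x^2 = L^2 / 2" .
  have xx: "x * x * 2 = L * L" using x2 by (simp add: power2_eq_square)
  have LL: "0 \<le> L * L" by simp
  have h1: "100 * (x * x) = 50 * (L * L)" using xx by (metis mult.assoc mult.commute numeral_times_numeral semiring_norm(12) semiring_norm(13) semiring_norm(15) semiring_norm(5) semiring_norm(6))
  have h2: "49 * (L * L) \<le> 50 * (L * L)" using LL by simp
  have h3: "49 * (L * L) \<le> 100 * (x * x)" unfolding h1 by (rule h2)
  have "(7 * L / 2)^2 \<le> (5 * x)^2" using h3 by (simp add: power_mult_distrib power2_eq_square)
  hence k: "7 * L / 2 \<le> 5 * x" by (rule power2_le_imp_le) (use x0 in simp)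
  have a1: "\<eta> * (5 * Tr * \<eta> + L / \<eta>) = 5 * Tr * \<eta>^2 + L" using ep by (simp add: distrib_left power2_eq_square mult.left_commute)
  have a2: "5 * Tr * \<eta>^2 + L = 7 * L / 2" unfolding e2 using Tr by (simp add: field_simps)
  have a3: "\<eta> * (5 * sqrt (Tr * L)) = 5 * x" unfolding x_def by (simp only: mult.left_commute)
  have "\<eta> * (5 * Tr * \<eta> + L / \<eta>) \<le> \<eta> * (5 * sqrt (Tr * L))" unfolding a1 a2 a3 by (rule k)
  thus ?thesis using ep by (simp only: mult_le_cancel_left_pos)
qed

theorem theorem3:
  fixes K T :: nat and l :: "nat \<Rightarrow> nat \<Rightarrow> real" and \<eta> \<gamma> :: real
  assumes "K \<ge> 2" and "T \<ge> 1"
    and "\<forall>t\<in>{1..T}. \<forall>i\<in>{1..K}. 0 \<le> l t i \<and> l t i \<le> 1"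
    and "\<eta> = sqrt (ln (real K) / (2 * real T))"
    and "\<gamma> = 2 * \<eta>"
    and "\<gamma> \<le> 1"
  shows "exp3g_regret (loopless_clique {1..K}) {1..K} {1..K} \<eta> \<gamma> l T
           \<le> 5 * sqrt (real T * ln (real K))"
proof -
  have K1: "real K > 1" using assms(1) by simp
  have L: "ln (real K) > 0" using K1 by simp
  have ep: "\<eta> > 0" using assms(2,4) L by simp
  define f where "f = (\<lambda>i. \<Sum>t=1..T. l t i)"
  have "Min (f ` {1..K}) \<in> f ` {1..K}" using assms(1) by (intro Min_in) auto
  then obtain k where k: "k \<in> {1..K}" "Min (f ` {1..K}) = f k" by auto
  have mb: "exp3g_exp_loss (loopless_clique {1..K}) {1..K} {1..K} \<eta> \<gamma> l T []
      \<le> (\<Sum>s<T. l (length ([]::nat list) + 1 + s) k) + real T * (5 * \<eta>)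
         - ln (exp3g_q (loopless_clique {1..K}) {1..K} {1..K} \<eta> \<gamma> l [] k) / \<eta>"
  proof (rule main_bound[OF assms(1) _ _ assms(3) ep assms(5) assms(6)])
    show "finite {1..K}" by simp
    show "card {1..K} = K" by simp
    show "length ([]::nat list) + T \<le> T" by simp
    show "k \<in> {1..K}" by (rule k(1))
  qed
  have q0: "exp3g_q (loopless_clique {1..K}) {1..K} {1..K} \<eta> \<gamma> l [] k = 1 / real K" using k(1) by simp
  have lnq: "ln (1 / real K) = - ln (real K)" using K1 by (simp add: ln_div)
  have lq: "ln (exp3g_q (loopless_clique {1..K}) {1..K} {1..K} \<eta> \<gamma> l [] k) / \<eta> = - (ln (real K) / \<eta>)"
    unfolding q0 lnq by simp
  have sm: "(\<Sum>s<T. l (length ([]::nat list) + 1 + s) k) = f k"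
    unfolding f_def by (simp add: sum.atLeast1_atMost_eq)
  have MINk: "(MIN i\<in>{1..K}. \<Sum>t=1..T. l t i) = f k" using k(2) unfolding f_def .
  have "exp3g_regret (loopless_clique {1..K}) {1..K} {1..K} \<eta> \<gamma> l T
      = exp3g_exp_loss (loopless_clique {1..K}) {1..K} {1..K} \<eta> \<gamma> l T [] - f k"
    unfolding exp3g_regret_def MINk ..
  also have "\<dots> \<le> real T * (5 * \<eta>) + ln (real K) / \<eta>"
    using mb lq sm by linarith
  also have "\<dots> = 5 * real T * \<eta> + ln (real K) / \<eta>" by simp
  also have "\<dots> \<le> 5 * sqrt (real T * ln (real K))"
    by (rule final_arith[OF L _ assms(4)]) (use assms(2) in simp)
  finally show ?thesis .
qed

end
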